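(* Assume (A1)–(A4) hold and that the sequence $\{x_k\}$ generated by LMTR converges to a solution $x^*$ of $h(x)=0$; let $\theta\in[0,1[$ be the Łojasiewicz exponent of $\psi$ at $x^*$ and $\delta$ the Hölder order from (A1). Then: (i) for all sufficiently large $k$, $x_{k+1}=x_k+d_k$, where $d_k$ is the direction computed at the start of iteration $k$ with the current value $\lambda_k$ (i.e., $p_k=0$); (ii) there exist constants $s>0$, $\overline{s}>0$ and $k'\in\mathbb{N}$ such that, if $x_{k'}\in\mathbb{B}(x^*,s)$, then $\{x_k\}_{k\ge k'}\subset\mathbb{B}(x^*,\overline{s})$, $\psi(x_k)\to0$ and $\mathrm{dist}(x_k,\Omega)\to0$ as $k\to\infty$; (iii) if $\theta=0$, the sequences $\{\psi(x_k)\}$ and $\{\mathrm{dist}(x_k,\Omega)\}$ converge to $0$ in a finite number of steps; (iv) if $\theta\in\,]0,\frac12]$, the sequences $\{\psi(x_k)\}$ and $\{\mathrm{dist}(x_k,\Omega)\}$ converge linearly to $0$; (v) if $\theta\in\,]\frac12,1[$, there exist positive constants $\varsigma_1,\varsigma_2$ such that for all large $k$, \[ \psi(x_k)\le\varsigma_1k^{-\frac{1}{2\theta-1}}\quad\text{and}\quad\mathrm{dist}(x_k,\Omega)\le\varsigma_2k^{-\frac{\delta}{2(2\theta-1)}}. \]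
   Context: Let $h:\mathbb{R}^m\to\mathbb{R}^n$ be continuously differentiable; $\nabla h(x)\in\mathbb{R}^{m\times n}$ denotes the transposed Jacobian, $\|\cdot\|$ the Euclidean norm (operator norm for matrices), $\psi(x):=\frac12\|h(x)\|^2$, $\nabla\psi(x)=\nabla h(x)h(x)$; $\Omega:=\{x:h(x)=0\}\ne\emptyset$; $\mathbb{B}(x,r)$ is the closed ball of radius $r$ about $x$; $\mathcal{L}(x_0):=\{x:\psi(x)\le\psi(x_0)\}$; $q_k(d):=\frac12\|\nabla h(x_k)^Td+h(x_k)\|^2$. Assumptions: (A1) $h$ is Hölder metrically subregular of order $\delta\in\,]0,1]$ at $(x^*,0)$: there are $\beta>0$, $\mathtt r\in\,]0,1[$ with $\beta\,\mathrm{dist}(x,\Omega)\le\|h(x)\|^\delta$ for all $x\in\mathbb{B}(x^*,\mathtt r)$. (A2) $\mathcal{L}(x_0)$ is bounded. (A3) $\|\nabla h(x)-\nabla h(y)\|\le L\|x-y\|$ for all $x,y$. (A4) $\psi$ satisfies the Łojasiewicz gradient inequality: for every critical point $\bar x$ of $\psi$ there exist $\kappa>0$, $r_{\bar x}>0$ and $\theta\in[0,1[$ such that $|\psi(x)-\psi(\bar x)|^\theta\le\kappa\|\nabla\psi(x)\|$ for all $x\in\mathbb{B}(\bar x,r_{\bar x})$. Algorithm LMTR: parameters $x_0$, $\varepsilon>0$, $\eta\in\,]0,4\delta[$, $0<\rho_2<1<\rho_1$, $0<\upsilon_1<\upsilon_2<1$, $\mu_{\min}>0$, $0\le\xi_{\min}\le\xi_{\max}$,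 $0\le\omega_{\min}\le\omega_{\max}$ with $\xi_{\min}+\omega_{\min}>0$, $0\le\theta_{\min}\le\theta_{\max}<1$, sequences $\xi_k\in[\xi_{\min},\xi_{\max}]$, $\omega_k\in[\omega_{\min},\omega_{\max}]$, $\theta_k\in[\theta_{\min},\theta_{\max}]$; $\lambda_0:=1$, $D_0:=\psi(x_0)$. At iteration $k$: stop if $\|h(x_k)\|\le\varepsilon$ or $\|\nabla\psi(x_k)\|\le\varepsilon$. Otherwise $\mu_k:=\xi_k\|h(x_k)\|^\eta+\omega_k\|\nabla h(x_k)h(x_k)\|^\eta$. For a value $\lambda>0$ set $\widehat\mu:=\max\{\mu_{\min},\lambda\mu_k\}$, let $d$ solve $(\nabla h(x_k)\nabla h(x_k)^T+\widehat\mu I)d=-\nabla h(x_k)h(x_k)$ and $\widehat r:=(D_k-\psi(x_k+d))/(q_k(0)-q_k(d))$. Starting from $\lambda=\lambda_k$, replace $\lambda$ by $\rho_1\lambda$ as long as $\widehat r<\upsilon_1$; $p_k$ is the number of replacements and the accepted step is the final $d$. Then $x_{k+1}:=x_k+(\text{accepted step})$, $\lambda_{k+1}:=\rho_2\rho_1^{p_k}\lambda_k$ if the final $\widehat r\ge\upsilon_2$, else $\lambda_{k+1}:=\rho_1^{p_k}\lambda_k$, and $D_{k+1}:=(1-\theta_k)\psi(x_{k+1})+\theta_kD_k$. *)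

theory Defs
  imports "HOL-Analysis.Analysis"
begin

text \<open>Its Jacobian at x is
  the n x m matrix Jac x :: real^'m^'n (so h'(x) v = Jac x *v v); the paper's transposed
  Jacobian nabla h(x) in R^(m x n) is transpose (Jac x).\<close>

definition psi :: "(real^'m \<Rightarrow> real^'n) \<Rightarrow> real^'m \<Rightarrow> real" where
  "psi h x = (norm (h x))\<^sup>2 / 2"

definition grad_psi :: "(real^'m \<Rightarrow> real^'n) \<Rightarrow> (real^'m \<Rightarrow> real^'m^'n) \<Rightarrow> real^'m \<Rightarrow> real^'m" where
  "grad_psi h Jac x = transpose (Jac x) *v h x"

definition qmod :: "(real^'m \<Rightarrow> real^'n) \<Rightarrow> (real^'m \<Rightarrow> real^'m^'n) \<Rightarrow> real^'m \<Rightarrow> real^'m \<Rightarrow> real" where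
  "qmod h Jac x d = (norm (Jac x *v d + h x))\<^sup>2 / 2"

definition lm_dir :: "(real^'m \<Rightarrow> real^'n) \<Rightarrow> (real^'m \<Rightarrow> real^'m^'n) \<Rightarrow> real^'m \<Rightarrow> real \<Rightarrow> real^'m" where
  "lm_dir h Jac x mu =
     (SOME d. (transpose (Jac x) ** Jac x + mu *\<^sub>R mat 1) *v d = - (transpose (Jac x) *v h x))"

definition lm_mu :: "(real^'m \<Rightarrow> real^'n) \<Rightarrow> (real^'m \<Rightarrow> real^'m^'n) \<Rightarrow> real \<Rightarrow> real \<Rightarrow> real \<Rightarrow> real^'m \<Rightarrow> real" where
  "lm_mu h Jac eta xi om x = xi * norm (h x) powr eta + om * norm (grad_psi h Jac x) powr eta"

definition lm_ratio :: "(real^'m \<Rightarrow> real^'n) \<Rightarrow> (real^'m \<Rightarrow> real^'m^'n) \<Rightarrow> real \<Rightarrow> real \<Rightarrow> real \<Rightarrow> real^'m \<Rightarrow> real \<Rightarrow> real" where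
  "lm_ratio h Jac mumin mu D x lam =
     (let d = lm_dir h Jac x (max mumin (lam * mu))
      in (D - psi h (x + d)) / (qmod h Jac x 0 - qmod h Jac x d))"

text \<open>The sequences (x_k, lambda_k, D_k, p_k) generated by LMTR with tolerance epsilon = 0:
  if iteration k stops (h(x_k) = 0 or nabla psi(x_k) = 0), the sequence stays constant from then on.
  Otherwise p_k is the number of times lambda is multiplied by rho1 in the inner loop, i.e.
  the first j with r-hat(rho1^j lambda_k) >= upsilon1.\<close>
definition lmtr_seq ::
  "(real^'m \<Rightarrow> real^'n) \<Rightarrow> (real^'m \<Rightarrow> real^'m^'n) \<Rightarrow> real \<Rightarrow> real \<Rightarrow> real \<Rightarrow> real \<Rightarrow> real \<Rightarrow> real
   \<Rightarrow> (nat \<Rightarrow> real) \<Rightarrow> (nat \<Rightarrow> real) \<Rightarrow> (nat \<Rightarrow> real)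
   \<Rightarrow> (nat \<Rightarrow> real^'m) \<Rightarrow> (nat \<Rightarrow> real) \<Rightarrow> (nat \<Rightarrow> real) \<Rightarrow> (nat \<Rightarrow> nat) \<Rightarrow> bool" where
  "lmtr_seq h Jac eta rho1 rho2 ups1 ups2 mumin xi om th x lam D p \<longleftrightarrow>
     lam 0 = 1 \<and> D 0 = psi h (x 0) \<and>
     (\<forall>k. if h (x k) = 0 \<or> grad_psi h Jac (x k) = 0
          then x (Suc k) = x k \<and> lam (Suc k) = lam k \<and> D (Suc k) = D k
          else (let mu = lm_mu h Jac eta (xi k) (om k) (x k);
                    r = (\<lambda>j::nat. lm_ratio h Jac mumin mu (D k) (x k) (rho1 ^ j * lam k))
                in (\<forall>j < p k. r j < ups1) \<and> ups1 \<le> r (p k) \<and>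
                   x (Suc k) = x k + lm_dir h Jac (x k) (max mumin (rho1 ^ p k * lam k * mu)) \<and>
                   lam (Suc k) = (if ups2 \<le> r (p k) then rho2 * rho1 ^ p k * lam k
                                  else rho1 ^ p k * lam k) \<and>
                   D (Suc k) = (1 - th k) * psi h (x (Suc k)) + th k * D k))"

end

theory Submission
  imports Defs
begin


lemma tr_inner: "(v::real^'m) \<bullet> (transpose (J::real^'m^'n) *v w) = (J *v v) \<bullet> w"
  by (metis dot_lmul_matrix inner_commute transpose_matrix_vector)

lemma tr_inner2: "(v::real^'m) \<bullet> (w v* (J::real^'m^'n)) = (J *v v) \<bullet> w"
  using tr_inner by (metis transpose_matrix_vector)

lemma sysmat_apply: "(transpose (J::real^'m^'n) ** J + mu *\<^sub>R mat 1) *v d = transpose J *v (J *v d) + mu *\<^sub>R d"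
proof -
  have "(mu *\<^sub>R mat 1) *v d = mu *\<^sub>R d" by (metis matrix_vector_mul_lid scaleR_matrix_vector_assoc)
  then show ?thesis by (simp only: matrix_vector_mult_add_rdistrib matrix_vector_mul_assoc)
qed

lemma sysmat_surj:
  assumes "0 < mu"
  shows "\<exists>d. (transpose (J::real^'m^'n) ** J + mu *\<^sub>R mat 1) *v d = y"
proof -
  let ?A = "transpose J ** J + mu *\<^sub>R mat 1"
  have inj: "inj ((*v) ?A)"
  proof (rule injI)
    fix u v assume "?A *v u = ?A *v v"
    then have "?A *v (u - v) = 0" by (simp add: matrix_vector_mult_diff_distrib)
    then have "(u - v) \<bullet> (?A *v (u - v)) = 0" by simp
    then have "(J *v (u-v)) \<bullet> (J *v (u-v)) + mu * ((u-v) \<bullet> (u-v)) = 0"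
      by (simp add: sysmat_apply inner_add_right tr_inner2)
    then have "mu * ((u-v) \<bullet> (u-v)) \<le> 0" by (smt (verit) inner_ge_zero)
    then have "(u-v) \<bullet> (u-v) \<le> 0" using assms by (simp add: mult_le_0_iff)
    then show "u = v" by (metis eq_iff_diff_eq_0 inner_eq_zero_iff inner_ge_zero order_antisym)
  qed
  then have "\<exists>B. B ** ?A = mat 1" using matrix_left_invertible_injective by blast
  then obtain B where "?A ** B = mat 1" using matrix_left_right_inverse by blast
  then have "?A *v (B *v y) = y" by (simp add: matrix_vector_mul_assoc)
  then show ?thesis by blast
qed

lemma dir_facts:
  fixes J :: "real^'m^'n" and hx :: "real^'n"
  assumes eq: "transpose J *v (J *v d) + mu *\<^sub>R d = - (transpose J *v hx)" and mu: "0 < mu"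
  shows "(norm (J *v 0 + hx))\<^sup>2 / 2 - (norm (J *v d + hx))\<^sup>2 / 2 = (norm (J *v d))\<^sup>2 / 2 + mu * (norm d)\<^sup>2"
    and "mu * norm d \<le> norm (transpose J *v hx)"
    and "(norm (J *v d + hx))\<^sup>2 \<le> (norm hx)\<^sup>2"
proof -
  have dg: "d \<bullet> (transpose J *v hx) = - ((norm (J *v d))\<^sup>2 + mu * (norm d)\<^sup>2)"
  proof -
    have "d \<bullet> (transpose J *v (J *v d) + mu *\<^sub>R d) = d \<bullet> (- (transpose J *v hx))" using eq by simp
    then show ?thesis by (simp add: inner_add_right tr_inner2 power2_norm_eq_inner)
  qed
  have "(norm (J *v d + hx))\<^sup>2 = (norm (J *v d))\<^sup>2 + 2 * ((J *v d) \<bullet> hx) + (norm hx)\<^sup>2"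
    by (simp add: power2_norm_eq_inner inner_add_left inner_add_right inner_commute)
  moreover have "(J *v d) \<bullet> hx = d \<bullet> (transpose J *v hx)" by (simp only: tr_inner)
  ultimately have q: "(norm (J *v d + hx))\<^sup>2 = (norm hx)\<^sup>2 - (norm (J *v d))\<^sup>2 - 2 * mu * (norm d)\<^sup>2"
    using dg by simp
  show "(norm (J *v 0 + hx))\<^sup>2 / 2 - (norm (J *v d + hx))\<^sup>2 / 2 = (norm (J *v d))\<^sup>2 / 2 + mu * (norm d)\<^sup>2"
    using q by (simp add: field_simps)
  show "(norm (J *v d + hx))\<^sup>2 \<le> (norm hx)\<^sup>2" proof -
    have "0 \<le> mu * (norm d)\<^sup>2" using mu by simp
    moreover have "0 \<le> (norm (J *v d))\<^sup>2" by simp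
    ultimately show ?thesis using q by linarith
  qed
  have "mu * (norm d)\<^sup>2 \<le> norm d * norm (transpose J *v hx)"
  proof -
    have "mu * (norm d)\<^sup>2 \<le> - (d \<bullet> (transpose J *v hx))" using dg by simp
    also have "\<dots> \<le> norm d * norm (transpose J *v hx)"
      by (metis Cauchy_Schwarz_ineq2 abs_le_D2 inner_minus_right norm_minus_cancel)
    finally show ?thesis .
  qed
  then show "mu * norm d \<le> norm (transpose J *v hx)"
    by (cases "norm d = 0") (auto simp: power2_eq_square)
qed



lemma matvec_bound:
  fixes A :: "real^'n^'m"
  shows "norm (A *v v) \<le> real CARD('m) * real CARD('n) * norm A * norm v"
proof -
  have c: "\<And>i j. \<bar>A $ i $ j\<bar> \<le> norm A"
    by (rule order_trans[OF component_le_norm_cart Finite_Cartesian_Product.norm_nth_le])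
  have "norm (A *v v) \<le> onorm ((*v) A) * norm v"
    by (rule onorm) simp
  also have "\<dots> \<le> real CARD('m) * real CARD('n) * norm A * norm v"
    by (rule mult_right_mono[OF onorm_le_matrix_component[OF c]]) simp
  finally show ?thesis .
qed

lemma matvec_bound_tr:
  fixes A :: "real^'n^'m"
  shows "norm (transpose A *v v) \<le> real CARD('m) * real CARD('n) * norm A * norm v"
proof -
  have c: "\<And>i j. \<bar>transpose A $ i $ j\<bar> \<le> norm A"
    by (simp add: transpose_def) (rule order_trans[OF component_le_norm_cart Finite_Cartesian_Product.norm_nth_le])
  have "norm (transpose A *v v) \<le> onorm ((*v) (transpose A)) * norm v"
    by (rule onorm) (rule matrix_vector_mul_bounded_linear)
  also have "\<dots> \<le> real CARD('n) * real CARD('m) * norm A * norm v"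
    by (rule mult_right_mono[OF onorm_le_matrix_component[OF c]]) simp
  finally show ?thesis by (simp add: mult.commute mult.left_commute)
qed

lemma remainder_bound:
  fixes h :: "real^'m \<Rightarrow> real^'n" and Jac :: "real^'m \<Rightarrow> real^'m^'n"
  assumes der: "\<And>y. (h has_derivative (\<lambda>v. Jac y *v v)) (at y)"
    and lip: "\<forall>y z. onorm (\<lambda>v. (Jac y - Jac z) *v v) \<le> L * norm (y - z)"
    and L: "0 \<le> L"
  shows "norm (h (x + d) - h x - Jac x *v d) \<le> L * (norm d)\<^sup>2"
proof -
  let ?S = "closed_segment x (x + d)"
  have "norm (h (x + d) - h x - (\<lambda>v. Jac x *v v) (x + d - x)) \<le> norm (x + d - x) * (L * norm d)"
  proof (rule differentiable_bound_linearization[where S = ?S and f' = "\<lambda>y v. Jac y *v v"])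
    fix t :: real assume "t \<in> {0..1}"
    then show "x + t *\<^sub>R (x + d - x) \<in> ?S"
      by (auto simp: closed_segment_def algebra_simps intro!: exI[of _ t])
  next
    fix y assume "y \<in> ?S"
    show "(h has_derivative (\<lambda>v. Jac y *v v)) (at y within ?S)"
      using der has_derivative_at_withinI by blast
  next
    fix y assume y: "y \<in> ?S"
    have "(\<lambda>v. Jac y *v v) - (\<lambda>v. Jac x *v v) = (\<lambda>v. (Jac y - Jac x) *v v)"
      by (rule ext) (simp add: matrix_vector_mult_diff_rdistrib)
    moreover have "onorm (\<lambda>v. (Jac y - Jac x) *v v) \<le> L * norm (y - x)" using lip by blast
    moreover have "L * norm (y - x) \<le> L * norm d"
      using segment_bound1[OF y] L by (simp add: mult_left_mono)
    ultimately show "onorm ((\<lambda>v. Jac y *v v) - (\<lambda>v. Jac x *v v)) \<le> L * norm d" by simp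
  next
    show "x \<in> ?S" by simp
  qed
  then show ?thesis by (simp add: power2_eq_square mult.commute mult.left_commute)
qed

lemma lip_nonneg:
  fixes Jac :: "real^'m \<Rightarrow> real^'m^'n"
  assumes lip: "\<forall>y z. onorm (\<lambda>v. (Jac y - Jac z) *v v) \<le> L * norm (y - z)"
  shows "0 \<le> L"
proof -
  have "onorm (\<lambda>v. (Jac (axis i 1) - Jac 0) *v v) \<le> L * norm (axis i (1::real) - 0)" using lip by blast
  moreover have "0 \<le> onorm (\<lambda>v. (Jac (axis i 1) - Jac 0) *v v)" by (rule onorm_pos_le) simp
  ultimately show ?thesis by (simp add: norm_axis_1)
qed

lemma rpow_bern:
  fixes r s :: real assumes "0 < r" "0 < s"
  shows "1 + s * (1 - r) \<le> r powr (- s)"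
proof -
  have "r powr (-s) = exp (- s * ln r)" using assms by (simp add: powr_def)
  also have "\<dots> \<ge> 1 + (- s * ln r)" by (rule exp_ge_add_one_self)
  finally have "1 - s * ln r \<le> r powr (-s)" by simp
  moreover have "ln r \<le> r - 1" using assms ln_le_minus_one by blast
  then have "s * (1 - r) \<le> s * (- ln r)" using assms by (intro mult_left_mono) auto
  then have "s * (1 - r) \<le> - s * ln r" by simp
  ultimately show ?thesis by simp
qed

lemma recur_step:
  fixes a b c s :: real
  assumes a: "0 < a" and b: "0 < b" and s: "0 < s" and c: "0 < c"
    and ab: "b \<le> a - c * a powr (1 + s)"
  shows "a powr (-s) + s * c \<le> b powr (-s)"
proof -
  define r where "r = b / a"
  have r: "0 < r" using a b by (simp add: r_def)
  have "b = a * r" using a by (simp add: r_def)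
  have "a powr (1+s) = a * a powr s" using a by (simp add: powr_add)
  then have "a * r \<le> a - c * (a * a powr s)" using ab \<open>b = a*r\<close> by simp
  then have "a * r \<le> a * (1 - c * a powr s)" by (simp add: algebra_simps)
  then have "r \<le> 1 - c * a powr s" using a by simp
  then have "c * a powr s \<le> 1 - r" by simp
  have "1 + s * (c * a powr s) \<le> 1 + s * (1 - r)"
    using \<open>c * a powr s \<le> 1 - r\<close> s by (simp add: mult_left_mono)
  also have "\<dots> \<le> r powr (-s)" by (rule rpow_bern[OF r s])
  finally have *: "1 + s * c * a powr s \<le> r powr (-s)" by (simp add: mult.assoc)
  have "b powr (-s) = a powr (-s) * r powr (-s)" using a r \<open>b = a*r\<close> by (simp add: powr_mult)
  also have "\<dots> \<ge> a powr (-s) * (1 + s * c * a powr s)"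
    using * by (simp add: mult_left_mono)
  finally show ?thesis using a
    by (simp add: algebra_simps powr_minus field_simps)
qed



lemma decr_from:
  fixes e :: "nat \<Rightarrow> real"
  assumes "\<forall>k\<ge>K. e (Suc k) \<le> e k" "K \<le> a" "a \<le> b"
  shows "e b \<le> e a"
  using assms(3)
proof (induction b rule: dec_induct)
  case base then show ?case by simp
next
  case (step n) then show ?case using assms(1,2) by (meson order_trans le_trans)
qed

lemma sublinear_rate:
  fixes e :: "nat \<Rightarrow> real" and s c :: real
  assumes s: "0 < s" and c: "0 < c"
    and nn: "\<forall>k\<ge>K. 0 \<le> e k" and dec: "\<forall>k\<ge>K. e (Suc k) \<le> e k"
    and step: "\<forall>k\<ge>K. e (k + 2) \<le> e k - c * e k powr (1 + s)"
  shows "\<exists>\<sigma>>0. \<exists>K'. \<forall>k\<ge>K'. e k \<le> \<sigma> * real k powr (- 1 / s)"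
proof -
  have ind: "e (K + 2*j) = 0 \<or> real j * (s * c) \<le> e (K + 2*j) powr (-s)" for j
  proof (induction j)
    case 0 then show ?case using nn by (auto intro: powr_ge_zero)
  next
    case (Suc j)
    let ?a = "e (K + 2*j)" and ?b = "e (K + 2 * Suc j)"
    have st: "?b \<le> ?a - c * ?a powr (1 + s)" using step[rule_format, of "K + 2*j"] by (simp add: algebra_simps)
    have b0: "0 \<le> ?b" using nn by simp
    show ?case
    proof (cases "?a = 0")
      case True
      then have "?b \<le> 0" using st by simp
      then show ?thesis using b0 by simp
    next
      case False
      moreover have "0 \<le> ?a" using nn by simp
      ultimately have a: "0 < ?a" by linarith
      show ?thesis
      proof (cases "?b = 0")
        case True then show ?thesis by simp
      next
        case False
        then have b: "0 < ?b" using b0 by simp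
        have "?a powr (-s) + s * c \<le> ?b powr (-s)" by (rule recur_step[OF a b s c st])
        moreover have "real j * (s * c) \<le> ?a powr (-s)" using Suc.IH \<open>?a \<noteq> 0\<close> by simp
        ultimately show ?thesis by (simp add: algebra_simps)
      qed
    qed
  qed
  define \<sigma> where "\<sigma> = (s * c / 4) powr (- 1 / s)"
  have \<sigma>: "0 < \<sigma>" using s c by (simp add: \<sigma>_def)
  have "\<forall>k\<ge>2*K+4. e k \<le> \<sigma> * real k powr (- 1 / s)"
  proof (intro allI impI)
    fix k assume k: "2*K+4 \<le> k"
    define j where "j = (k - K) div 2"
    have kj1: "K + 2*j \<le> k" "k \<le> 4 * j" "0 < j" using k unfolding j_def by auto
    have kj: "K + 2*j \<le> k" "real k \<le> 4 * real j" "0 < j" using kj1 by simp_all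
    have ek: "e k \<le> e (K + 2*j)" by (rule decr_from[OF dec _ kj(1)]) simp
    show "e k \<le> \<sigma> * real k powr (- 1 / s)"
    proof (cases "e (K + 2*j) = 0")
      case True
      then show ?thesis using ek \<sigma> by (simp add: order_trans[OF ek])
    next
      case False
      moreover have "0 \<le> e (K + 2*j)" using nn by simp
      ultimately have a: "0 < e (K + 2*j)" by linarith
      have t: "real j * (s * c) \<le> e (K + 2*j) powr (-s)" using ind[of j] False by simp
      have tpos: "0 < real j * (s * c)" using kj s c by simp
      have "e (K + 2*j) = (e (K + 2*j) powr (-s)) powr (- 1 / s)"
        using a s by (simp add: powr_powr)
      also have "\<dots> \<le> (real j * (s * c)) powr (- 1 / s)"
        by (rule powr_mono2'[OF _ tpos t]) (use s in simp)
      also have "\<dots> \<le> (real k * (s * c / 4)) powr (- 1 / s)"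
        by (rule powr_mono2') (use s c kj in \<open>auto simp: field_simps\<close>)
      also have "\<dots> = \<sigma> * real k powr (- 1 / s)"
        using kj s c by (simp add: \<sigma>_def powr_mult[symmetric] mult.commute)
      finally show ?thesis using ek by simp
    qed
  qed
  then show ?thesis using \<sigma> by blast
qed

lemma linear_rate:
  fixes e :: "nat \<Rightarrow> real" and q :: real
  assumes q: "0 < q" "q < 1"
    and nn: "\<forall>k\<ge>K. 0 \<le> e k"
    and step: "\<forall>k\<ge>K. e (k + 2) \<le> q * e k"
  shows "\<exists>C q1. 0 < q1 \<and> q1 < 1 \<and> (\<forall>k\<ge>K. e k \<le> C * q1 ^ k)"
proof -
  define q1 where "q1 = sqrt q"
  have q1: "0 < q1" "q1 < 1" "q1^2 = q" using q by (simp_all add: q1_def real_sqrt_lt_1_iff)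
  define C where "C = max (e K / q1 ^ K) (e (Suc K) / q1 ^ Suc K)"
  have "e k \<le> C * q1 ^ k" if "K \<le> k" for k
    using that
  proof (induction k rule: less_induct)
    case (less k)
    show ?case
    proof (cases "k = K \<or> k = Suc K")
      case True
      have p: "0 < q1 ^ k" using q1 by simp
      have "e k / q1 ^ k \<le> C" using True by (auto simp: C_def)
      then show ?thesis using p by (simp add: field_simps)
    next
      case False
      then have k2: "K \<le> k - 2" "k - 2 < k" "k = (k - 2) + 2" using less.prems by auto
      have "e k \<le> q * e (k - 2)" using step[rule_format, OF k2(1)] k2(3) by simp
      also have "\<dots> \<le> q * (C * q1 ^ (k - 2))"
        using less.IH[OF k2(2) k2(1)] q by (simp add: mult_left_mono)
      also have "\<dots> = C * q1 ^ k" using k2(3) q1(3)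
        by (metis mult.commute mult.left_commute power_add)
      finally show ?thesis .
    qed
  qed
  then show ?thesis using q1 by blast
qed

lemma eventually_to_all:
  fixes f :: "nat \<Rightarrow> real" and q C :: real
  assumes q: "0 < q" and ev: "\<forall>k\<ge>K. f k \<le> C * q ^ k"
  shows "\<exists>c1>0. \<forall>k. f k \<le> c1 * q ^ k"
proof -
  define c1 where "c1 = max C 1 + (\<Sum>i<K. \<bar>f i\<bar> / q ^ i)"
  have s0: "0 \<le> (\<Sum>i<K. \<bar>f i\<bar> / q ^ i)" using q by (intro sum_nonneg) simp
  have pos: "0 < c1" using s0 unfolding c1_def by linarith
  have "f k \<le> c1 * q ^ k" for k
  proof (cases "K \<le> k")
    case True
    have "C \<le> c1" using s0 by (simp add: c1_def)
    then have "C * q^k \<le> c1 * q^k" using q by (simp add: mult_right_mono)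
    then show ?thesis using ev True by (meson order_trans)
  next
    case False
    have "\<bar>f k\<bar> / q ^ k \<le> (\<Sum>i<K. \<bar>f i\<bar> / q ^ i)"
      by (rule member_le_sum) (use False q in auto)
    also have "\<dots> \<le> c1" by (simp add: c1_def)
    finally have "\<bar>f k\<bar> \<le> c1 * q ^ k" using q by (simp add: field_simps)
    then show ?thesis by simp
  qed
  then show ?thesis using pos by blast
qed


locale lmctx =
  fixes h :: "real^'m \<Rightarrow> real^'n" and Jac :: "real^'m \<Rightarrow> real^'m^'n"
    and xs :: "real^'m" and \<delta> \<beta> rr L :: real
    and eta rho1 rho2 ups1 ups2 mumin ximin ximax ommin ommax thmin thmax :: real
    and xi om th :: "nat \<Rightarrow> real"
    and x :: "nat \<Rightarrow> real^'m" and lam D :: "nat \<Rightarrow> real" and p :: "nat \<Rightarrow> nat"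
    and \<theta> \<kappa> r\<theta> :: real
  assumes C1_deriv: "\<And>y. (h has_derivative (\<lambda>v. Jac y *v v)) (at y)"
    and C1_cont: "continuous_on UNIV Jac"
    and Omega_ne: "{y. h y = 0} \<noteq> {}"
    and A1: "0 < \<delta>" "\<delta> \<le> 1" "0 < \<beta>" "0 < rr" "rr < 1"
      "\<forall>y\<in>cball xs rr. \<beta> * infdist y {z. h z = 0} \<le> norm (h y) powr \<delta>"
    and A2: "bounded {y. psi h y \<le> psi h (x 0)}"
    and A3: "\<forall>y z. onorm (\<lambda>v. (Jac y - Jac z) *v v) \<le> L * norm (y - z)"
    and A4: "\<forall>xb. grad_psi h Jac xb = 0 \<longrightarrow>
      (\<exists>\<kappa>' r' \<theta>'. 0 < \<kappa>' \<and> 0 < r' \<and> 0 \<le> \<theta>' \<and> \<theta>' < 1 \<and>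
        (\<forall>y\<in>cball xb r'. \<bar>psi h y - psi h xb\<bar> powr \<theta>' \<le> \<kappa>' * norm (grad_psi h Jac y)))"
    and par: "0 < eta" "eta < 4 * \<delta>" "0 < rho2" "rho2 < 1" "1 < rho1"
      "0 < ups1" "ups1 < ups2" "ups2 < 1" "0 < mumin"
      "0 \<le> ximin" "ximin \<le> ximax" "0 \<le> ommin" "ommin \<le> ommax" "0 < ximin + ommin"
      "0 \<le> thmin" "thmin \<le> thmax" "thmax < 1"
      "\<forall>k. ximin \<le> xi k \<and> xi k \<le> ximax"
      "\<forall>k. ommin \<le> om k \<and> om k \<le> ommax"
      "\<forall>k. thmin \<le> th k \<and> th k \<le> thmax"
    and gen: "lmtr_seq h Jac eta rho1 rho2 ups1 ups2 mumin xi om th x lam D p"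
    and conv: "x \<longlonglongrightarrow> xs" and sol: "h xs = 0"
    and loj: "0 < \<kappa>" "0 < r\<theta>" "0 \<le> \<theta>" "\<theta> < 1"
      "\<forall>y\<in>cball xs r\<theta>. \<bar>psi h y - psi h xs\<bar> powr \<theta> \<le> \<kappa> * norm (grad_psi h Jac y)"
begin

abbreviation "Om \<equiv> {z. h z = 0}"
abbreviation "g k \<equiv> grad_psi h Jac (x k)"
abbreviation "stop k \<equiv> h (x k) = 0 \<or> g k = 0"
abbreviation "muk k \<equiv> lm_mu h Jac eta (xi k) (om k) (x k)"
abbreviation "rat k j \<equiv> lm_ratio h Jac mumin (muk k) (D k) (x k) (rho1 ^ j * lam k)"

lemma step_unf:
  assumes "\<not> stop k"
  shows "(\<forall>j < p k. rat k j < ups1) \<and> ups1 \<le> rat k (p k) \<and>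
         x (Suc k) = x k + lm_dir h Jac (x k) (max mumin (rho1 ^ p k * lam k * muk k)) \<and>
         lam (Suc k) = (if ups2 \<le> rat k (p k) then rho2 * rho1 ^ p k * lam k else rho1 ^ p k * lam k) \<and>
         D (Suc k) = (1 - th k) * psi h (x (Suc k)) + th k * D k"
  using gen assms unfolding lmtr_seq_def Let_def by (metis (no_types, lifting))

lemma stop_const:
  assumes "stop k"
  shows "x (Suc k) = x k \<and> lam (Suc k) = lam k \<and> D (Suc k) = D k"
  using gen assms unfolding lmtr_seq_def by metis

lemma init: "lam 0 = 1" "D 0 = psi h (x 0)"
  using gen unfolding lmtr_seq_def by auto

lemma dir_eq:
  assumes "0 < mu"
  shows "transpose (Jac y) *v (Jac y *v lm_dir h Jac y mu) + mu *\<^sub>R lm_dir h Jac y mu = - grad_psi h Jac y"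
proof -
  have "\<exists>d. (transpose (Jac y) ** Jac y + mu *\<^sub>R mat 1) *v d = - (transpose (Jac y) *v h y)"
    by (rule sysmat_surj[OF assms])
  then have "(transpose (Jac y) ** Jac y + mu *\<^sub>R mat 1) *v lm_dir h Jac y mu = - (transpose (Jac y) *v h y)"
    unfolding lm_dir_def by (rule someI_ex)
  then show ?thesis by (simp only: sysmat_apply grad_psi_def)
qed

lemma pred_facts:
  fixes y :: "real^'m" and mu :: real
  assumes mu: "0 < mu"
  defines "d \<equiv> lm_dir h Jac y mu"
  shows "qmod h Jac y 0 - qmod h Jac y d = (norm (Jac y *v d))\<^sup>2 / 2 + mu * (norm d)\<^sup>2"
    and "mu * norm d \<le> norm (grad_psi h Jac y)"
    and "(norm (Jac y *v d + h y))\<^sup>2 \<le> (norm (h y))\<^sup>2"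
    and "grad_psi h Jac y \<noteq> 0 \<Longrightarrow> d \<noteq> 0"
    and "qmod h Jac y 0 = psi h y"
proof -
  have eq: "transpose (Jac y) *v (Jac y *v d) + mu *\<^sub>R d = - (transpose (Jac y) *v h y)"
    using dir_eq[OF mu, of y] by (simp add: d_def grad_psi_def)
  note f = dir_facts[OF eq mu]
  show "qmod h Jac y 0 - qmod h Jac y d = (norm (Jac y *v d))\<^sup>2 / 2 + mu * (norm d)\<^sup>2"
    using f(1) by (simp add: qmod_def)
  show "mu * norm d \<le> norm (grad_psi h Jac y)" using f(2) by (simp add: grad_psi_def)
  show "(norm (Jac y *v d + h y))\<^sup>2 \<le> (norm (h y))\<^sup>2" using f(3) .
  show "qmod h Jac y 0 = psi h y" by (simp add: qmod_def psi_def)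
  assume "grad_psi h Jac y \<noteq> 0"
  then show "d \<noteq> 0" using eq by (auto simp: grad_psi_def)
qed

lemma L_nonneg: "0 \<le> L"
  using lip_nonneg[OF A3] .

lemma ratio_good:
  fixes y :: "real^'m" and mu Dv :: real
  assumes mu: "mumin \<le> mu" and gy: "grad_psi h Jac y \<noteq> 0" and Dv: "psi h y \<le> Dv"
    and small: "norm (h y) * L + L\<^sup>2 / 2 * (norm (grad_psi h Jac y) / mumin)\<^sup>2 \<le> (1 - ups1) * mumin"
  defines "d \<equiv> lm_dir h Jac y mu"
  shows "ups1 \<le> (Dv - psi h (y + d)) / (qmod h Jac y 0 - qmod h Jac y d)"
    and "0 < qmod h Jac y 0 - qmod h Jac y d"
proof -
  have mu0: "0 < mu" using mu par(9) by linarith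
  note pf = pred_facts[OF mu0, of y, folded d_def]
  define pr where "pr = qmod h Jac y 0 - qmod h Jac y d"
  have d0: "d \<noteq> 0" using pf(4) gy by blast
  have prlow: "mu * (norm d)\<^sup>2 \<le> pr" using pf(1) by (simp add: pr_def)
  have prpos: "0 < pr" using d0 mu0 prlow by (smt (verit) mult_pos_pos zero_less_norm_iff zero_less_power)
  then show "0 < qmod h Jac y 0 - qmod h Jac y d" by (simp add: pr_def)
  have nd: "norm d \<le> norm (grad_psi h Jac y) / mumin"
  proof -
    have "mumin * norm d \<le> mu * norm d" using mu by (simp add: mult_right_mono)
    then have "mumin * norm d \<le> norm (grad_psi h Jac y)" using pf(2) by linarith
    then show ?thesis using par(9) by (simp add: field_simps)
  qed
  define w where "w = Jac y *v d + h y"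
  define R where "R = h (y + d) - h y - Jac y *v d"
  have Rb: "norm R \<le> L * (norm d)\<^sup>2" unfolding R_def by (rule remainder_bound[OF C1_deriv A3 L_nonneg])
  have wb: "norm w \<le> norm (h y)" using pf(3) unfolding w_def by (simp add: power2_le_iff_abs_le)
  have hyd: "h (y + d) = w + R" by (simp add: w_def R_def)
  have "psi h (y + d) = (norm (w + R))\<^sup>2 / 2" by (simp add: psi_def hyd)
  also have "\<dots> \<le> (norm w + norm R)\<^sup>2 / 2"
    by (simp add: norm_triangle_ineq power_mono)
  also have "\<dots> = (norm w)\<^sup>2 / 2 + norm w * norm R + (norm R)\<^sup>2 / 2" by (simp add: power2_sum)
  also have "\<dots> \<le> (norm w)\<^sup>2 / 2 + norm (h y) * (L * (norm d)\<^sup>2) + (L * (norm d)\<^sup>2)\<^sup>2 / 2"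
    using wb Rb by (intro add_mono mult_mono power_mono divide_right_mono) auto
  also have "\<dots> = qmod h Jac y d + (norm d)\<^sup>2 * (norm (h y) * L + L\<^sup>2 / 2 * (norm d)\<^sup>2)"
    by (simp add: qmod_def w_def power2_eq_square algebra_simps)
  also have "\<dots> \<le> qmod h Jac y d + (norm d)\<^sup>2 * ((1 - ups1) * mumin)"
  proof -
    have "(norm d)\<^sup>2 \<le> (norm (grad_psi h Jac y) / mumin)\<^sup>2"
      using nd by (simp add: power_mono)
    then have "L\<^sup>2 / 2 * (norm d)\<^sup>2 \<le> L\<^sup>2 / 2 * (norm (grad_psi h Jac y) / mumin)\<^sup>2"
      by (simp add: mult_left_mono)
    then have "norm (h y) * L + L\<^sup>2 / 2 * (norm d)\<^sup>2 \<le> (1 - ups1) * mumin" using small by linarith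
    then show ?thesis by (simp add: mult_left_mono)
  qed
  also have "\<dots> \<le> qmod h Jac y d + (1 - ups1) * pr"
  proof -
    have "(norm d)\<^sup>2 * ((1 - ups1) * mumin) \<le> (1 - ups1) * (mu * (norm d)\<^sup>2)"
    proof -
      have "0 \<le> (1 - ups1) * (norm d)\<^sup>2" using par(7,8) by simp
      then have "((1 - ups1) * (norm d)\<^sup>2) * mumin \<le> ((1 - ups1) * (norm d)\<^sup>2) * mu"
        using mu by (simp add: mult_left_mono)
      then show ?thesis by (simp add: algebra_simps)
    qed
    also have "\<dots> \<le> (1 - ups1) * pr" using prlow par(7,8) by (simp add: mult_left_mono)
    finally show ?thesis by simp
  qed
  finally have "psi h (y + d) \<le> qmod h Jac y d + (1 - ups1) * pr" .
  then have "ups1 * pr \<le> Dv - psi h (y + d)" using Dv pf(5) by (simp add: pr_def algebra_simps)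
  then show "ups1 \<le> (Dv - psi h (y + d)) / (qmod h Jac y 0 - qmod h Jac y d)"
    using prpos by (simp add: pr_def field_simps)
qed


abbreviation "mh k \<equiv> max mumin (rho1 ^ p k * lam k * muk k)"
abbreviation "dk k \<equiv> lm_dir h Jac (x k) (mh k)"
abbreviation "pred k \<equiv> qmod h Jac (x k) 0 - qmod h Jac (x k) (dk k)"

lemma mh_pos: "0 < mh k" using par(9) by linarith

lemma nonstop_facts:
  assumes ns: "\<not> stop k"
  shows "0 < pred k" "ups1 * pred k \<le> D k - psi h (x (Suc k))" "x (Suc k) = x k + dk k"
    "mh k * (norm (dk k))\<^sup>2 \<le> pred k"
    "D (Suc k) = (1 - th k) * psi h (x (Suc k)) + th k * D k"
proof -
  note su = step_unf[OF ns]
  note pf = pred_facts[OF mh_pos[of k], of "x k"]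
  have d0: "dk k \<noteq> 0" using pf(4) ns by blast
  show mhp: "mh k * (norm (dk k))\<^sup>2 \<le> pred k" using pf(1) by simp
  have "0 < mh k * (norm (dk k))\<^sup>2" using d0 mh_pos[of k] by simp
  then show pp: "0 < pred k" using mhp by linarith
  show xs1: "x (Suc k) = x k + dk k" using su by blast
  have "ups1 \<le> (D k - psi h (x k + dk k)) / pred k"
    using su unfolding lm_ratio_def Let_def by (simp add: mult.assoc)
  then show "ups1 * pred k \<le> D k - psi h (x (Suc k))" using pp xs1 by (simp add: field_simps)
  show "D (Suc k) = (1 - th k) * psi h (x (Suc k)) + th k * D k" using su by blast
qed



lemma th_b: "0 \<le> th k" "th k \<le> thmax" "th k < 1"
proof -
  have "thmin \<le> th k" "th k \<le> thmax" using par(20) by auto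
  then show "0 \<le> th k" "th k \<le> thmax" "th k < 1" using par(15,17) by linarith+
qed

lemma psi_nonneg: "0 \<le> psi h y" by (simp add: psi_def)

lemma psi_le_D: "psi h (x k) \<le> D k"
proof (induction k)
  case 0 then show ?case using init by simp
next
  case (Suc k)
  show ?case
  proof (cases "stop k")
    case True then show ?thesis using stop_const[OF True] Suc by simp
  next
    case False
    note nf = nonstop_facts[OF False]
    have "0 \<le> ups1 * pred k" using nf(1) par(6) by simp
    then have a: "psi h (x (Suc k)) \<le> D k" using nf(2) by linarith
    have "psi h (x (Suc k)) = (1 - th k) * psi h (x (Suc k)) + th k * psi h (x (Suc k))" by (simp add: algebra_simps)
    also have "\<dots> \<le> D (Suc k)" unfolding nf(5) using a th_b[of k] by (simp add: mult_left_mono)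
    finally show ?thesis .
  qed
qed

lemma D_nonneg: "0 \<le> D k" using psi_le_D[of k] psi_nonneg[of "x k"] by linarith

lemma D_drop:
  assumes ns: "\<not> stop k"
  shows "(1 - thmax) * (D k - psi h (x (Suc k))) \<le> D k - D (Suc k)"
    "0 \<le> D k - psi h (x (Suc k))"
proof -
  note nf = nonstop_facts[OF ns]
  have "0 \<le> ups1 * pred k" using nf(1) par(6) by simp
  then have a: "0 \<le> D k - psi h (x (Suc k))" using nf(2) by linarith
  then show "0 \<le> D k - psi h (x (Suc k))" .
  have "D k - D (Suc k) = (1 - th k) * (D k - psi h (x (Suc k)))" unfolding nf(5) by (simp add: algebra_simps)
  moreover have "(1 - thmax) * (D k - psi h (x (Suc k))) \<le> (1 - th k) * (D k - psi h (x (Suc k)))"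
    using a th_b[of k] by (simp add: mult_right_mono)
  ultimately show "(1 - thmax) * (D k - psi h (x (Suc k))) \<le> D k - D (Suc k)" by simp
qed

lemma D_dec: "D (Suc k) \<le> D k"
proof (cases "stop k")
  case True then show ?thesis using stop_const[OF True] by simp
next
  case False
  have "0 \<le> (1 - thmax) * (D k - psi h (x (Suc k)))" using D_drop(2)[OF False] par(17) by simp
  then show ?thesis using D_drop(1)[OF False] by linarith
qed

lemma stop_persist:
  assumes st: "stop k"
  shows "\<forall>j\<ge>k. x j = x k" "h (x k) = 0"
proof -
  show all: "\<forall>j\<ge>k. x j = x k"
  proof (intro allI impI)
    fix j assume "k \<le> j"
    then show "x j = x k"
    proof (induction j rule: dec_induct)
      case base then show ?case by simp
    next
      case (step n)
      then have "stop n" using st by simp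
      then have "x (Suc n) = x n" using stop_const by blast
      then show ?case using step.IH by simp
    qed
  qed
  have "(\<lambda>j. x (j + k)) \<longlonglongrightarrow> xs" using conv by (rule LIMSEQ_ignore_initial_segment)
  moreover have "(\<lambda>j. x (j + k)) = (\<lambda>j. x k)" by (rule ext, rule all[rule_format]) simp
  ultimately have "(\<lambda>j. x k) \<longlonglongrightarrow> xs" by simp
  then have "x k = xs" by (rule LIMSEQ_const_iff[THEN iffD1])
  then show "h (x k) = 0" using sol by simp
qed


lemma lam_pos: "0 < lam k"
proof (induction k)
  case 0 then show ?case using init by simp
next
  case (Suc k)
  show ?case
  proof (cases "stop k")
    case True then show ?thesis using stop_const[OF True] Suc by simp
  next
    case False
    then show ?thesis using step_unf[OF False] Suc par(3,5) by simp
  qed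
qed


lemma h_isCont: "isCont h y"
  using C1_deriv has_derivative_continuous by blast

lemma hx_lim: "(\<lambda>k. h (x k)) \<longlonglongrightarrow> 0"
  using isCont_tendsto_compose[OF h_isCont conv] sol by simp

lemma Jx_lim: "(\<lambda>k. Jac (x k)) \<longlonglongrightarrow> Jac xs"
proof -
  have "isCont Jac xs" using C1_cont continuous_on_eq_continuous_at open_UNIV by blast
  then show ?thesis using isCont_tendsto_compose[OF _ conv] by blast
qed

abbreviation "NJ \<equiv> norm (Jac xs) + 1"

lemma NJ_ev: "\<exists>K. \<forall>k\<ge>K. norm (Jac (x k)) \<le> NJ"
proof -
  have "(\<lambda>k. norm (Jac (x k))) \<longlonglongrightarrow> norm (Jac xs)" using Jx_lim by (rule tendsto_norm)
  then have "eventually (\<lambda>k. norm (Jac (x k)) < NJ) sequentially" by (rule order_tendstoD) simp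
  then show ?thesis unfolding eventually_sequentially by (meson less_imp_le)
qed

lemma g_bound: "norm (grad_psi h Jac y) \<le> (real CARD('n) * real CARD('m)) * norm (Jac y) * norm (h y)"
  unfolding grad_psi_def by (rule matvec_bound_tr)

lemma CC_pos: "0 < (real CARD('n) * real CARD('m))" by simp

lemma g_lim: "(\<lambda>k. g k) \<longlonglongrightarrow> 0"
proof -
  obtain K where K: "\<forall>k\<ge>K. norm (Jac (x k)) \<le> NJ" using NJ_ev by blast
  have "eventually (\<lambda>k. norm (g k) \<le> (real CARD('n) * real CARD('m)) * NJ * norm (h (x k))) sequentially"
    unfolding eventually_sequentially
  proof (intro exI allI impI)
    fix k assume "K \<le> k"
    then have "(real CARD('n) * real CARD('m)) * norm (Jac (x k)) * norm (h (x k)) \<le> (real CARD('n) * real CARD('m)) * NJ * norm (h (x k))"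
      using K CC_pos by (intro mult_right_mono mult_left_mono) auto
    then show "norm (g k) \<le> (real CARD('n) * real CARD('m)) * NJ * norm (h (x k))" using g_bound[of "x k"] by linarith
  qed
  moreover have "(\<lambda>k. (real CARD('n) * real CARD('m)) * NJ * norm (h (x k))) \<longlonglongrightarrow> 0"
    using tendsto_mult_right_zero[OF tendsto_norm_zero[OF hx_lim], of "real CARD('n) * real CARD('m) * NJ"] by simp
  ultimately show ?thesis by (rule Lim_null_comparison)
qed

lemma muk_nonneg: "0 \<le> muk k"
proof -
  have "0 \<le> xi k" "0 \<le> om k" using par(10,12,18,19) by (meson order_trans)+
  then show ?thesis unfolding lm_mu_def by simp
qed

lemma muk_lim: "(\<lambda>k. muk k) \<longlonglongrightarrow> 0"
proof -
  have "eventually (\<lambda>k. norm (muk k) \<le> ximax * norm (h (x k)) powr eta + ommax * norm (g k) powr eta) sequentially"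
  proof (rule always_eventually, rule allI)
    fix k
    have "xi k \<le> ximax" "om k \<le> ommax" using par(18,19) by auto
    then have "muk k \<le> ximax * norm (h (x k)) powr eta + ommax * norm (g k) powr eta"
      unfolding lm_mu_def by (intro add_mono mult_right_mono) auto
    then show "norm (muk k) \<le> ximax * norm (h (x k)) powr eta + ommax * norm (g k) powr eta"
      using muk_nonneg[of k] by simp
  qed
  moreover have "(\<lambda>k. ximax * norm (h (x k)) powr eta + ommax * norm (g k) powr eta) \<longlonglongrightarrow> 0"
  proof -
    have a: "(\<lambda>k. norm (h (x k)) powr eta) \<longlonglongrightarrow> 0"
      by (rule tendsto_zero_powrI[OF tendsto_norm_zero[OF hx_lim] tendsto_const]) (use par(1) in auto)
    have b: "(\<lambda>k. norm (g k) powr eta) \<longlonglongrightarrow> 0"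
      by (rule tendsto_zero_powrI[OF tendsto_norm_zero[OF g_lim] tendsto_const]) (use par(1) in auto)
    show ?thesis using tendsto_add[OF tendsto_mult_right_zero[OF a] tendsto_mult_right_zero[OF b]]
      by (simp add: mult.commute)
  qed
  ultimately show ?thesis by (rule Lim_null_comparison)
qed

lemma small_ev: "\<exists>K. \<forall>k\<ge>K. norm (h (x k)) * L + L\<^sup>2 / 2 * (norm (g k) / mumin)\<^sup>2 \<le> (1 - ups1) * mumin"
proof -
  have "(\<lambda>k. norm (h (x k)) * L + L\<^sup>2 / 2 * (norm (g k) / mumin)\<^sup>2) \<longlonglongrightarrow> 0 * L + L\<^sup>2 / 2 * (0 / mumin)\<^sup>2"
    using par(9) by (intro tendsto_intros tendsto_norm_zero[OF hx_lim] tendsto_norm_zero[OF g_lim]) auto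
  then have "(\<lambda>k. norm (h (x k)) * L + L\<^sup>2 / 2 * (norm (g k) / mumin)\<^sup>2) \<longlonglongrightarrow> 0" by simp
  moreover have "0 < (1 - ups1) * mumin" using par(7,8,9) by simp
  ultimately have "eventually (\<lambda>k. norm (h (x k)) * L + L\<^sup>2 / 2 * (norm (g k) / mumin)\<^sup>2 < (1 - ups1) * mumin) sequentially"
    by (rule order_tendstoD)
  then show ?thesis unfolding eventually_sequentially by (meson less_imp_le)
qed

lemma part_i_K:
  obtains K where "\<forall>k\<ge>K. \<not> stop k \<longrightarrow> p k = 0 \<and>
        x (Suc k) = x k + lm_dir h Jac (x k) (max mumin (lam k * muk k))"
proof -
  obtain K where K: "\<forall>k\<ge>K. norm (h (x k)) * L + L\<^sup>2 / 2 * (norm (g k) / mumin)\<^sup>2 \<le> (1 - ups1) * mumin"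
    using small_ev by blast
  have "p k = 0 \<and> x (Suc k) = x k + lm_dir h Jac (x k) (max mumin (lam k * muk k))"
    if k: "K \<le> k" and ns: "\<not> stop k" for k
  proof -
    have gk: "g k \<noteq> 0" using ns by simp
    have "ups1 \<le> (D k - psi h (x k + lm_dir h Jac (x k) (max mumin (rho1 ^ 0 * lam k * muk k)))) /
       (qmod h Jac (x k) 0 - qmod h Jac (x k) (lm_dir h Jac (x k) (max mumin (rho1 ^ 0 * lam k * muk k))))"
      by (rule ratio_good(1)[OF _ gk psi_le_D K[rule_format, OF k]]) simp
    then have r0: "ups1 \<le> rat k 0" unfolding lm_ratio_def Let_def by (simp add: mult.assoc)
    note su = step_unf[OF ns]
    have p0: "p k = 0"
    proof (rule ccontr)
      assume "p k \<noteq> 0"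
      then have "rat k 0 < ups1" using su by blast
      then show False using r0 by simp
    qed
    then show ?thesis using su by simp
  qed
  then show ?thesis using that by blast
qed

lemma two_step_real:
  fixes Dk Dk1 Dk2 q1 X a c1 tm :: real
  assumes q1: "0 \<le> q1" and Dk: "0 \<le> Dk" "Dk \<le> X" and X: "1 \<le> X" and a: "1 \<le> a"
    and c1: "0 < c1" and tm: "0 \<le> tm" "tm < 1"
    and h1: "(1 - tm) * (Dk - q1) \<le> Dk - Dk1"
    and h2: "(1 - tm) * (c1 * q1 powr a) \<le> Dk1 - Dk2"
    and h3: "0 \<le> Dk - q1"
  shows "Dk2 \<le> Dk - (1 - tm) * min (X powr (1 - a) / 2) (c1 / 2 powr a) * Dk powr a"
proof -
  define m where "m = min (X powr (1 - a) / 2) (c1 / 2 powr a)"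
  have Xp: "0 < X" using X by simp
  have pw: "X powr (1 - a) * Dk powr a \<le> Dk"
  proof (cases "Dk = 0")
    case True then show ?thesis by simp
  next
    case False
    then have Dp: "0 < Dk" using Dk by simp
    have "Dk powr a = Dk powr ((a - 1) + 1)" by simp
    also have "\<dots> = Dk powr (a - 1) * Dk" using Dp by (simp only: powr_add powr_one_gt_zero_iff) simp
    finally have "Dk powr a = Dk powr (a - 1) * Dk" .
    also have "\<dots> \<le> X powr (a - 1) * Dk"
      by (rule mult_right_mono[OF powr_mono2]) (use a Dk in auto)
    finally have "X powr (1 - a) * Dk powr a \<le> X powr (1 - a) * (X powr (a - 1) * Dk)"
      by (simp add: mult_left_mono)
    also have "\<dots> = Dk" using Xp by (simp add: powr_add[symmetric] mult.assoc[symmetric])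
    finally show ?thesis .
  qed
  have key: "m * Dk powr a \<le> (Dk - q1) + c1 * q1 powr a"
  proof (cases "q1 \<le> Dk / 2")
    case True
    have "m \<le> X powr (1 - a) / 2" unfolding m_def by (rule min.cobounded1)
    then have "m * Dk powr a \<le> X powr (1 - a) / 2 * Dk powr a"
      by (rule mult_right_mono) simp
    also have "\<dots> \<le> Dk / 2" using pw by simp
    also have "\<dots> \<le> Dk - q1" using True by simp
    also have "\<dots> \<le> (Dk - q1) + c1 * q1 powr a" using c1 by simp
    finally show ?thesis .
  next
    case False
    have "m \<le> c1 / 2 powr a" unfolding m_def by (rule min.cobounded2)
    then have "m * Dk powr a \<le> c1 / 2 powr a * Dk powr a"
      by (rule mult_right_mono) simp
    also have "\<dots> = c1 * (Dk / 2) powr a" using Dk by (simp add: powr_divide)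
    also have "\<dots> \<le> c1 * q1 powr a"
      using False Dk a c1 by (intro mult_left_mono powr_mono2) auto
    also have "\<dots> \<le> (Dk - q1) + c1 * q1 powr a" using h3 by simp
    finally show ?thesis .
  qed
  have "(1 - tm) * (m * Dk powr a) \<le> (1 - tm) * ((Dk - q1) + c1 * q1 powr a)"
    using key tm by (simp add: mult_left_mono)
  also have "\<dots> \<le> Dk - Dk2" using h1 h2 by (simp add: algebra_simps)
  finally show ?thesis by (simp add: m_def mult.assoc)
qed

lemma thmax_b: "0 \<le> thmax" "thmax < 1" using par(15,16,17) by linarith+

lemma rate_core:
  assumes nostop: "\<forall>k. \<not> stop k" and t': "1/2 \<le> t'" and kp: "0 < kp"
    and loj': "\<forall>k\<ge>K0. psi h (x k) powr t' \<le> kp * norm (g k)"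
  shows "\<exists>K c. 0 < c \<and> (\<forall>k\<ge>K. D (k + 2) \<le> D k - c * D k powr (2 * t'))"
proof -
  obtain K1 where K1: "\<forall>k\<ge>K1. \<not> stop k \<longrightarrow> p k = 0 \<and>
        x (Suc k) = x k + lm_dir h Jac (x k) (max mumin (lam k * muk k))"
    using part_i_K by blast
  obtain KJ where KJ: "\<forall>k\<ge>KJ. norm (Jac (x k)) \<le> NJ" using NJ_ev by blast
  have "eventually (\<lambda>k. muk k < 1) sequentially" using muk_lim by (rule order_tendstoD) simp
  then obtain Km where Km: "\<forall>k\<ge>Km. muk k \<le> 1" unfolding eventually_sequentially by (meson less_imp_le)
  define K2 where "K2 = max (max K0 K1) (max KJ Km)"
  define M where "M = max mumin (lam K1)"
  define CN where "CN = real CARD('n) * real CARD('m) * NJ"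
  define Q where "Q = CN * CN + M"
  have "0 < NJ" by (smt (verit) norm_ge_zero)
  then have CN: "0 < CN" unfolding CN_def by simp
  have M: "0 < M" using par(9) by (simp add: M_def)
  have Q: "0 < Q" using CN M unfolding Q_def by (simp add: add_pos_pos)
  have lamdec: "\<forall>k\<ge>K1. lam (Suc k) \<le> lam k"
  proof (intro allI impI)
    fix k assume k: "K1 \<le> k"
    have p0: "p k = 0" using K1 k nostop by blast
    have "lam (Suc k) = (if ups2 \<le> rat k (p k) then rho2 * rho1 ^ p k * lam k else rho1 ^ p k * lam k)"
      using step_unf[OF nostop[rule_format]] by blast
    then show "lam (Suc k) \<le> lam k" using p0 lam_pos[of k] par(3,4) by auto
  qed
  define c1 where "c1 = ups1 * mumin / (Q * Q) / (kp * kp)"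
  have c1: "0 < c1" using par(6,9) Q kp by (simp add: c1_def)
  have E: "c1 * psi h (x k) powr (2 * t') \<le> D k - psi h (x (Suc k))" if k: "K2 \<le> k" for k
  proof -
    have ns: "\<not> stop k" using nostop by blast
    have p0: "p k = 0" using K1 k ns by (simp add: K2_def)
    have mh: "mh k = max mumin (lam k * muk k)" using p0 by simp
    have "lam k \<le> lam K1" by (rule decr_from[OF lamdec order_refl]) (use k in \<open>simp add: K2_def\<close>)
    moreover have "lam k * muk k \<le> lam k" using Km k lam_pos[of k] muk_nonneg[of k]
      by (simp add: K2_def mult_left_le)
    ultimately have mhM: "mh k \<le> M" unfolding mh M_def by linarith
    define d where "d = dk k"
    have de: "transpose (Jac (x k)) *v (Jac (x k) *v d) + mh k *\<^sub>R d = - g k"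
      unfolding d_def by (rule dir_eq[OF mh_pos])
    have nJ: "norm (Jac (x k)) \<le> NJ" using KJ k by (simp add: K2_def)
    have "norm (Jac (x k) *v d) \<le> CN * norm d"
    proof -
      have "norm (Jac (x k) *v d) \<le> real CARD('n) * real CARD('m) * norm (Jac (x k)) * norm d"
        by (rule matvec_bound)
      also have "\<dots> \<le> CN * norm d" unfolding CN_def using nJ
        by (intro mult_right_mono mult_left_mono) auto
      finally show ?thesis .
    qed
    moreover have "norm (transpose (Jac (x k)) *v (Jac (x k) *v d)) \<le> CN * norm (Jac (x k) *v d)"
    proof -
      have "norm (transpose (Jac (x k)) *v (Jac (x k) *v d)) \<le> real CARD('n) * real CARD('m) * norm (Jac (x k)) * norm (Jac (x k) *v d)"
        by (rule matvec_bound_tr)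
      also have "\<dots> \<le> CN * norm (Jac (x k) *v d)" unfolding CN_def using nJ
        by (intro mult_right_mono mult_left_mono) auto
      finally show ?thesis .
    qed
    ultimately have t1: "norm (transpose (Jac (x k)) *v (Jac (x k) *v d)) \<le> CN * CN * norm d"
    proof -
      have "CN * norm (Jac (x k) *v d) \<le> CN * (CN * norm d)"
        using CN \<open>norm (Jac (x k) *v d) \<le> CN * norm d\<close> by (simp add: mult_left_mono)
      then show ?thesis using \<open>norm (transpose (Jac (x k)) *v (Jac (x k) *v d)) \<le> CN * norm (Jac (x k) *v d)\<close>
        by (simp add: mult.assoc)
    qed
    have "norm (g k) = norm (transpose (Jac (x k)) *v (Jac (x k) *v d) + mh k *\<^sub>R d)"
      using de by (metis norm_minus_cancel)
    also have "\<dots> \<le> CN * CN * norm d + mh k * norm d"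
    proof -
      have "norm (mh k *\<^sub>R d) = mh k * norm d" using mh_pos[of k] by simp
      then show ?thesis using t1 norm_triangle_ineq[of "transpose (Jac (x k)) *v (Jac (x k) *v d)" "mh k *\<^sub>R d"]
        by linarith
    qed
    also have "\<dots> \<le> Q * norm d"
    proof -
      have "mh k * norm d \<le> M * norm d" using mhM by (rule mult_right_mono) simp
      then show ?thesis unfolding Q_def by (simp add: algebra_simps)
    qed
    finally have gQ: "norm (g k) \<le> Q * norm d" .
    have "mumin * (norm d)\<^sup>2 \<le> mh k * (norm d)\<^sup>2" by (simp add: mult_right_mono)
    also have "\<dots> \<le> pred k" using nonstop_facts(4)[OF ns] by (simp add: d_def)
    finally have pl: "mumin * (norm d)\<^sup>2 \<le> pred k" .
    have "(norm (g k))\<^sup>2 \<le> (Q * norm d)\<^sup>2" using gQ by (simp add: power_mono)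
    then have "(norm (g k))\<^sup>2 / (Q * Q) \<le> (norm d)\<^sup>2" using Q by (simp add: field_simps power2_eq_square)
    then have "(ups1 * mumin) * ((norm (g k))\<^sup>2 / (Q * Q)) \<le> (ups1 * mumin) * (norm d)\<^sup>2"
      using par(6,9) by (intro mult_left_mono) auto
    then have "ups1 * mumin * ((norm (g k))\<^sup>2 / (Q * Q)) \<le> ups1 * (mumin * (norm d)\<^sup>2)"
      by (simp only: mult.assoc)
    also have "\<dots> \<le> ups1 * pred k" using pl par(6) by (simp add: mult_left_mono)
    also have "\<dots> \<le> D k - psi h (x (Suc k))" using nonstop_facts(2)[OF ns] .
    finally have g2: "ups1 * mumin / (Q * Q) * (norm (g k))\<^sup>2 \<le> D k - psi h (x (Suc k))" by simp
    have lk: "psi h (x k) powr t' \<le> kp * norm (g k)" using loj' k by (simp add: K2_def)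
    have "psi h (x k) powr (2 * t') = (psi h (x k) powr t')\<^sup>2"
    proof -
      have "psi h (x k) powr (2 * t') = psi h (x k) powr (t' + t')" by (simp only: mult_2)
      also have "\<dots> = psi h (x k) powr t' * psi h (x k) powr t'" by (rule powr_add)
      finally show ?thesis by (simp only: power2_eq_square)
    qed
    also have "\<dots> \<le> (kp * norm (g k))\<^sup>2" using lk by (simp add: power_mono)
    finally have "psi h (x k) powr (2 * t') \<le> kp * kp * (norm (g k))\<^sup>2" by (simp add: power2_eq_square ac_simps)
    then have "c1 * psi h (x k) powr (2 * t') \<le> c1 * (kp * kp * (norm (g k))\<^sup>2)"
      using c1 by (simp add: mult_left_mono)
    also have "\<dots> = ups1 * mumin / (Q * Q) * (norm (g k))\<^sup>2" using kp by (simp add: c1_def field_simps)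
    finally show ?thesis using g2 by linarith
  qed
  define X where "X = max 1 (D K2)"
  define c where "c = (1 - thmax) * min (X powr (1 - 2 * t') / 2) (c1 / 2 powr (2 * t'))"
  have cpos: "0 < c" using thmax_b c1 by (simp add: c_def X_def)
  have "D (k + 2) \<le> D k - c * D k powr (2 * t')" if k: "K2 \<le> k" for k
  proof -
    have k1: "K2 \<le> Suc k" using k by simp
    have "D k \<le> D K2" by (rule decr_from[of K2 D]) (use D_dec k in auto)
    then have DX: "D k \<le> X" by (simp add: X_def)
    have h2: "(1 - thmax) * (c1 * psi h (x (Suc k)) powr (2 * t')) \<le> D (Suc k) - D (Suc (Suc k))"
    proof -
      have "(1 - thmax) * (c1 * psi h (x (Suc k)) powr (2 * t')) \<le> (1 - thmax) * (D (Suc k) - psi h (x (Suc (Suc k))))"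
        using E[OF k1] thmax_b by (simp add: mult_left_mono)
      also have "\<dots> \<le> D (Suc k) - D (Suc (Suc k))" using D_drop(1) nostop by blast
      finally show ?thesis .
    qed
    have "D (Suc (Suc k)) \<le> D k - c * D k powr (2 * t')"
      unfolding c_def
      by (rule two_step_real[OF psi_nonneg D_nonneg DX _ _ c1 thmax_b D_drop(1) h2 D_drop(2)])
         (use t' nostop in \<open>auto simp: X_def\<close>)
    then show ?thesis by (simp add: numeral_2_eq_2)
  qed
  then show ?thesis using cpos by blast
qed

lemma pow_powr: "0 < q \<Longrightarrow> (q ^ k) powr a = (q powr a) ^ k" for q a :: real
proof -
  assume q: "0 < q"
  have "(q ^ k) powr a = (q powr real k) powr a" using q by (simp add: powr_realpow)
  also have "\<dots> = (q powr a) powr real k" by (simp add: powr_powr mult.commute)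
  also have "\<dots> = (q powr a) ^ k" using q by (simp add: powr_realpow)
  finally show ?thesis .
qed

lemma ev_ball: "0 < r \<Longrightarrow> \<exists>K. \<forall>k\<ge>K. x k \<in> cball xs r"
proof -
  assume r: "0 < r"
  have "eventually (\<lambda>k. dist (x k) xs < r) sequentially" using conv r by (rule tendstoD)
  then show ?thesis unfolding eventually_sequentially by (metis dist_commute less_imp_le mem_cball)
qed

lemma psix_lim: "(\<lambda>k. psi h (x k)) \<longlonglongrightarrow> 0"
proof -
  have "(\<lambda>k. (norm (h (x k)))\<^sup>2 / 2) \<longlonglongrightarrow> (norm (0::real^'n))\<^sup>2 / 2"
    by (intro tendsto_intros hx_lim) simp_all
  then show ?thesis by (simp add: psi_def)
qed

lemma psi_xs: "psi h xs = 0" using sol by (simp add: psi_def)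

lemma dist_psi:
  assumes "y \<in> cball xs rr"
  shows "infdist y Om \<le> (2 * psi h y) powr (\<delta> / 2) / \<beta>"
proof -
  have "norm (h y) = ((norm (h y))\<^sup>2) powr (1/2)" by (simp add: square_powr_half)
  also have "(norm (h y))\<^sup>2 = 2 * psi h y" by (simp add: psi_def)
  finally have "norm (h y) powr \<delta> = ((2 * psi h y) powr (1/2)) powr \<delta>" by simp
  also have "\<dots> = (2 * psi h y) powr (\<delta> / 2)" by (simp add: powr_powr)
  finally have "\<beta> * infdist y Om \<le> (2 * psi h y) powr (\<delta> / 2)" using A1(6) assms by metis
  then show ?thesis using A1(3) by (simp add: field_simps)
qed

lemma stop_case:
  assumes "stop k0"
  shows "\<forall>k\<ge>k0. psi h (x k) = 0 \<and> infdist (x k) Om = 0"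
proof (intro allI impI)
  fix k assume "k0 \<le> k"
  then have "x k = x k0" using stop_persist(1)[OF assms] by blast
  then have "h (x k) = 0" using stop_persist(2)[OF assms] by simp
  then show "psi h (x k) = 0 \<and> infdist (x k) Om = 0" by (simp add: psi_def)
qed

lemma part_ii:
  "\<exists>s sb k'. 0 < s \<and> 0 < sb \<and>
          (x k' \<in> cball xs s \<longrightarrow>
             (\<forall>k\<ge>k'. x k \<in> cball xs sb) \<and>
             (\<lambda>k. psi h (x k)) \<longlonglongrightarrow> 0 \<and>
             (\<lambda>k. infdist (x k) Om) \<longlonglongrightarrow> 0)"
proof -
  have "bounded (range x)" using conv by (rule convergent_imp_bounded)
  then obtain e where e0: "\<forall>y\<in>range x. dist xs y \<le> e" unfolding bounded_any_center[where a=xs] by blast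
  then have e: "range x \<subseteq> cball xs e" by (auto simp: mem_cball)
  have il: "(\<lambda>k. infdist (x k) Om) \<longlonglongrightarrow> 0"
    using tendsto_infdist[OF conv, of Om] sol by simp
  have "x k \<in> cball xs (max e 1)" for k
  proof -
    have "x k \<in> cball xs e" using e by blast
    then show ?thesis by (simp add: mem_cball)
  qed
  then have "\<forall>k\<ge>0. x k \<in> cball xs (max e 1)" by blast
  moreover have "(0::real) < 1" "(0::real) < max e 1" by simp_all
  ultimately show ?thesis using psix_lim il by blast
qed

lemma part_iii:
  assumes th0: "\<theta> = 0"
  shows "\<exists>K. \<forall>k\<ge>K. psi h (x k) = 0 \<and> infdist (x k) Om = 0"
proof -
  obtain K1 where K1: "\<forall>k\<ge>K1. x k \<in> cball xs r\<theta>" using ev_ball loj(2) by blast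
  have "(\<lambda>k. \<kappa> * norm (g k)) \<longlonglongrightarrow> \<kappa> * 0"
    by (intro tendsto_intros tendsto_norm_zero[OF g_lim])
  then have "eventually (\<lambda>k. \<kappa> * norm (g k) < 1) sequentially" by (intro order_tendstoD) auto
  then obtain K2 where K2: "\<forall>k\<ge>K2. \<kappa> * norm (g k) < 1" unfolding eventually_sequentially by blast
  have "psi h (x k) = 0 \<and> infdist (x k) Om = 0" if k: "max K1 K2 \<le> k" for k
  proof -
    have "\<bar>psi h (x k) - psi h xs\<bar> powr \<theta> \<le> \<kappa> * norm (g k)" using loj(5) K1 k by simp
    then have "psi h (x k) = 0" using K2 k th0 psi_xs by (auto split: if_splits)
    then have "h (x k) = 0" by (simp add: psi_def)
    then show ?thesis using \<open>psi h (x k) = 0\<close> by simp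
  qed
  then show ?thesis by blast
qed

lemma dist_rate_lin:
  assumes q: "0 < q1" "q1 < 1" and K: "\<forall>k\<ge>K. psi h (x k) \<le> C * q1 ^ k"
  shows "\<exists>c2 q2. 0 < c2 \<and> 0 < q2 \<and> q2 < 1 \<and> (\<forall>k. infdist (x k) Om \<le> c2 * q2 ^ k)"
proof -
  obtain Kr where Kr: "\<forall>k\<ge>Kr. x k \<in> cball xs rr" using ev_ball A1(4) by blast
  define q2 where "q2 = q1 powr (\<delta> / 2)"
  have q2: "0 < q2" "q2 < 1" using q A1(1) by (simp_all add: q2_def powr01_less_one)
  define C2 where "C2 = (2 * max C 0) powr (\<delta> / 2) / \<beta>"
  have "infdist (x k) Om \<le> C2 * q2 ^ k" if k: "max K Kr \<le> k" for k
  proof -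
    have "infdist (x k) Om \<le> (2 * psi h (x k)) powr (\<delta> / 2) / \<beta>" using dist_psi Kr k by simp
    also have "\<dots> \<le> (2 * (max C 0 * q1 ^ k)) powr (\<delta> / 2) / \<beta>"
    proof -
      have "psi h (x k) \<le> max C 0 * q1 ^ k" using K k q
        by (meson max.cobounded1 max.cobounded2 mult_right_mono order_trans zero_le_power less_imp_le)
      then show ?thesis using A1(1,3) psi_nonneg
        by (intro divide_right_mono powr_mono2) auto
    qed
    also have "\<dots> = C2 * q2 ^ k"
      using q by (simp add: C2_def q2_def powr_mult pow_powr mult.assoc)
    finally show ?thesis .
  qed
  moreover have "0 < q2" using q2 by simp
  ultimately obtain c2 where "0 < c2" "\<forall>k. infdist (x k) Om \<le> c2 * q2 ^ k"
    using eventually_to_all[of q2 "max K Kr" "\<lambda>k. infdist (x k) Om" C2] by blast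
  then show ?thesis using q2 by blast
qed

lemma part_iv:
  assumes th: "0 < \<theta>" "\<theta> \<le> 1/2"
  shows "(\<exists>c1 q1. 0 < c1 \<and> 0 < q1 \<and> q1 < 1 \<and> (\<forall>k. psi h (x k) \<le> c1 * q1 ^ k)) \<and>
          (\<exists>c2 q2. 0 < c2 \<and> 0 < q2 \<and> q2 < 1 \<and>
             (\<forall>k. infdist (x k) Om \<le> c2 * q2 ^ k))"
proof -
  have "\<exists>C q1 K. 0 < q1 \<and> q1 < 1 \<and> (\<forall>k\<ge>K. psi h (x k) \<le> C * q1 ^ k)"
  proof (cases "\<exists>k0. stop k0")
    case True
    then obtain k0 where "stop k0" by blast
    then have "\<forall>k\<ge>k0. psi h (x k) \<le> 1 * (1/2) ^ k" using stop_case by simp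
    then show ?thesis by (intro exI[of _ 1] exI[of _ "1/2"] exI[of _ k0]) simp
  next
    case False
    then have nostop: "\<forall>k. \<not> stop k" by blast
    obtain K1 where K1: "\<forall>k\<ge>K1. x k \<in> cball xs r\<theta>" using ev_ball loj(2) by blast
    have "eventually (\<lambda>k. psi h (x k) < 1) sequentially" using psix_lim by (rule order_tendstoD) simp
    then obtain K2 where K2: "\<forall>k\<ge>K2. psi h (x k) \<le> 1" unfolding eventually_sequentially by (meson less_imp_le)
    have lj: "\<forall>k\<ge>max K1 K2. psi h (x k) powr (1/2) \<le> \<kappa> * norm (g k)"
    proof (intro allI impI)
      fix k assume k: "max K1 K2 \<le> k"
      have "psi h (x k) powr (1/2) \<le> psi h (x k) powr \<theta>"
        by (rule powr_mono') (use th K2 k psi_nonneg in auto)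
      also have "\<dots> = \<bar>psi h (x k) - psi h xs\<bar> powr \<theta>" using psi_xs psi_nonneg by simp
      also have "\<dots> \<le> \<kappa> * norm (g k)" using loj(5) K1 k by simp
      finally show "psi h (x k) powr (1/2) \<le> \<kappa> * norm (g k)" .
    qed
    obtain K c where c: "0 < c" and Kc: "\<forall>k\<ge>K. D (k + 2) \<le> D k - c * D k powr (2 * (1/2))"
      using rate_core[OF nostop _ loj(1) lj] by auto
    define q where "q = max (1 - c) (1/2)"
    have q: "0 < q" "q < 1" using c by (auto simp: q_def)
    have st: "\<forall>k\<ge>K. D (k + 2) \<le> q * D k"
    proof (intro allI impI)
      fix k assume k: "K \<le> k"
      have "D (k + 2) \<le> D k - c * D k powr (2 * (1/2))" using Kc k by blast
      then have "D (k + 2) \<le> D k - c * D k" using D_nonneg[of k] by simp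
      also have "\<dots> = (1 - c) * D k" by (simp add: algebra_simps)
      also have "\<dots> \<le> q * D k" using D_nonneg[of k] by (simp add: q_def mult_right_mono)
      finally show "D (k + 2) \<le> q * D k" .
    qed
    obtain C q1 where "0 < q1" "q1 < 1" "\<forall>k\<ge>K. D k \<le> C * q1 ^ k"
      using linear_rate[OF q _ st] D_nonneg by blast
    then have "\<forall>k\<ge>K. psi h (x k) \<le> C * q1 ^ k" using psi_le_D order_trans by blast
    then show ?thesis using \<open>0 < q1\<close> \<open>q1 < 1\<close> by blast
  qed
  then obtain C q1 K where q1: "0 < q1" "q1 < 1" and K: "\<forall>k\<ge>K. psi h (x k) \<le> C * q1 ^ k" by blast
  obtain c1 where "0 < c1" "\<forall>k. psi h (x k) \<le> c1 * q1 ^ k"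
    using eventually_to_all[OF q1(1) K] by blast
  then show ?thesis using dist_rate_lin[OF q1 K] q1 by blast
qed

lemma part_v:
  assumes th: "1/2 < \<theta>" "\<theta> < 1"
  shows "\<exists>\<sigma>1 \<sigma>2. 0 < \<sigma>1 \<and> 0 < \<sigma>2 \<and>
             (\<exists>K. \<forall>k\<ge>K.
                psi h (x k) \<le> \<sigma>1 * real k powr (- 1 / (2 * \<theta> - 1)) \<and>
                infdist (x k) Om \<le> \<sigma>2 * real k powr (- \<delta> / (2 * (2 * \<theta> - 1))))"
proof (cases "\<exists>k0. stop k0")
  case True
  then obtain k0 where "stop k0" by blast
  then have "\<forall>k\<ge>k0. psi h (x k) \<le> 1 * real k powr (- 1 / (2 * \<theta> - 1)) \<and>
                infdist (x k) Om \<le> 1 * real k powr (- \<delta> / (2 * (2 * \<theta> - 1)))"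
    using stop_case by simp
  then show ?thesis by (intro exI[of _ 1] exI[of _ 1]) auto
next
  case False
  then have nostop: "\<forall>k. \<not> stop k" by blast
  define s where "s = 2 * \<theta> - 1"
  have s: "0 < s" using th by (simp add: s_def)
  obtain K1 where K1: "\<forall>k\<ge>K1. x k \<in> cball xs r\<theta>" using ev_ball loj(2) by blast
  have lj: "\<forall>k\<ge>K1. psi h (x k) powr \<theta> \<le> \<kappa> * norm (g k)"
    using loj(5) K1 psi_xs psi_nonneg by simp
  obtain K c where c: "0 < c" and Kc: "\<forall>k\<ge>K. D (k + 2) \<le> D k - c * D k powr (2 * \<theta>)"
    using rate_core[OF nostop _ loj(1) lj] th by auto
  have "\<forall>k\<ge>K. D (k + 2) \<le> D k - c * D k powr (1 + s)" using Kc by (simp add: s_def)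
  then obtain \<sigma> K' where \<sigma>: "0 < \<sigma>" and K': "\<forall>k\<ge>K'. D k \<le> \<sigma> * real k powr (- 1 / s)"
    using sublinear_rate[OF s c, of K D] D_nonneg D_dec by blast
  obtain Kr where Kr: "\<forall>k\<ge>Kr. x k \<in> cball xs rr" using ev_ball A1(4) by blast
  define \<sigma>2 where "\<sigma>2 = (2 * \<sigma>) powr (\<delta> / 2) / \<beta>"
  have \<sigma>2: "0 < \<sigma>2" using \<sigma> A1(3) by (simp add: \<sigma>2_def)
  have "psi h (x k) \<le> \<sigma> * real k powr (- 1 / (2 * \<theta> - 1)) \<and>
        infdist (x k) Om \<le> \<sigma>2 * real k powr (- \<delta> / (2 * (2 * \<theta> - 1)))" if k: "max K' Kr \<le> k" for k
  proof -
    have p: "psi h (x k) \<le> \<sigma> * real k powr (- 1 / s)" using K' k psi_le_D[of k] by force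
    have "infdist (x k) Om \<le> (2 * psi h (x k)) powr (\<delta> / 2) / \<beta>" using dist_psi Kr k by simp
    also have "\<dots> \<le> (2 * (\<sigma> * real k powr (- 1 / s))) powr (\<delta> / 2) / \<beta>"
      using p A1(1,3) psi_nonneg by (intro divide_right_mono powr_mono2) auto
    also have "\<dots> = \<sigma>2 * real k powr (- \<delta> / (2 * s))"
      using \<sigma> by (simp add: \<sigma>2_def powr_mult powr_powr mult.commute)
    finally show ?thesis using p by (simp add: s_def)
  qed
  then show ?thesis using \<sigma> \<sigma>2 by blast
qed

end

theorem theorem6:
  fixes h :: "real^'m \<Rightarrow> real^'n" and Jac :: "real^'m \<Rightarrow> real^'m^'n"
    and xs :: "real^'m" and \<delta> \<beta> rr L :: real
    and eta rho1 rho2 ups1 ups2 mumin ximin ximax ommin ommax thmin thmax :: real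
    and xi om th :: "nat \<Rightarrow> real"
    and x :: "nat \<Rightarrow> real^'m" and lam D :: "nat \<Rightarrow> real" and p :: "nat \<Rightarrow> nat"
    and \<theta> \<kappa> r\<theta> :: real
  assumes C1_deriv: "\<And>y. (h has_derivative (\<lambda>v. Jac y *v v)) (at y)"
    and C1_cont: "continuous_on UNIV Jac"
    and Omega_ne: "{y. h y = 0} \<noteq> {}"
    \<comment> \<open>(A1) Hoelder metric subregularity at (x*,0)\<close>
    and A1: "0 < \<delta>" "\<delta> \<le> 1" "0 < \<beta>" "0 < rr" "rr < 1"
      "\<forall>y\<in>cball xs rr. \<beta> * infdist y {z. h z = 0} \<le> norm (h y) powr \<delta>"
    \<comment> \<open>(A2) bounded level set\<close>
    and A2: "bounded {y. psi h y \<le> psi h (x 0)}"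
    \<comment> \<open>(A3) Lipschitz Jacobian (operator norm)\<close>
    and A3: "\<forall>y z. onorm (\<lambda>v. (Jac y - Jac z) *v v) \<le> L * norm (y - z)"
    \<comment> \<open>(A4) Lojasiewicz gradient inequality at every critical point of psi\<close>
    and A4: "\<forall>xb. grad_psi h Jac xb = 0 \<longrightarrow>
      (\<exists>\<kappa>' r' \<theta>'. 0 < \<kappa>' \<and> 0 < r' \<and> 0 \<le> \<theta>' \<and> \<theta>' < 1 \<and>
        (\<forall>y\<in>cball xb r'. \<bar>psi h y - psi h xb\<bar> powr \<theta>' \<le> \<kappa>' * norm (grad_psi h Jac y)))"
    \<comment> \<open>algorithm parameters\<close>
    and par: "0 < eta" "eta < 4 * \<delta>" "0 < rho2" "rho2 < 1" "1 < rho1"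
      "0 < ups1" "ups1 < ups2" "ups2 < 1" "0 < mumin"
      "0 \<le> ximin" "ximin \<le> ximax" "0 \<le> ommin" "ommin \<le> ommax" "0 < ximin + ommin"
      "0 \<le> thmin" "thmin \<le> thmax" "thmax < 1"
      "\<forall>k. ximin \<le> xi k \<and> xi k \<le> ximax"
      "\<forall>k. ommin \<le> om k \<and> om k \<le> ommax"
      "\<forall>k. thmin \<le> th k \<and> th k \<le> thmax"
    and gen: "lmtr_seq h Jac eta rho1 rho2 ups1 ups2 mumin xi om th x lam D p"
    \<comment> \<open>convergence to a solution x*\<close>
    and conv: "x \<longlonglongrightarrow> xs" and sol: "h xs = 0"
    \<comment> \<open>theta is the Lojasiewicz exponent of psi at x*\<close>
    and loj: "0 < \<kappa>" "0 < r\<theta>" "0 \<le> \<theta>" "\<theta> < 1"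
      "\<forall>y\<in>cball xs r\<theta>. \<bar>psi h y - psi h xs\<bar> powr \<theta> \<le> \<kappa> * norm (grad_psi h Jac y)"
  shows
    \<comment> \<open>(i)\<close>
    "(\<exists>K. \<forall>k\<ge>K. \<not> (h (x k) = 0 \<or> grad_psi h Jac (x k) = 0) \<longrightarrow>
        p k = 0 \<and>
        x (Suc k) = x k + lm_dir h Jac (x k)
                      (max mumin (lam k * lm_mu h Jac eta (xi k) (om k) (x k))))
     \<comment> \<open>(ii)\<close>
     \<and> (\<exists>s sb k'. 0 < s \<and> 0 < sb \<and>
          (x k' \<in> cball xs s \<longrightarrow>
             (\<forall>k\<ge>k'. x k \<in> cball xs sb) \<and>
             (\<lambda>k. psi h (x k)) \<longlonglongrightarrow> 0 \<and>
             (\<lambda>k. infdist (x k) {z. h z = 0}) \<longlonglongrightarrow> 0))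
     \<comment> \<open>(iii)\<close>
     \<and> (\<theta> = 0 \<longrightarrow>
          (\<exists>K. \<forall>k\<ge>K. psi h (x k) = 0 \<and> infdist (x k) {z. h z = 0} = 0))
     \<comment> \<open>(iv) R-linear convergence\<close>
     \<and> (0 < \<theta> \<and> \<theta> \<le> 1/2 \<longrightarrow>
          (\<exists>c1 q1. 0 < c1 \<and> 0 < q1 \<and> q1 < 1 \<and> (\<forall>k. psi h (x k) \<le> c1 * q1 ^ k)) \<and>
          (\<exists>c2 q2. 0 < c2 \<and> 0 < q2 \<and> q2 < 1 \<and>
             (\<forall>k. infdist (x k) {z. h z = 0} \<le> c2 * q2 ^ k)))
     \<comment> \<open>(v)\<close>
     \<and> (1/2 < \<theta> \<and> \<theta> < 1 \<longrightarrow>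
          (\<exists>\<sigma>1 \<sigma>2. 0 < \<sigma>1 \<and> 0 < \<sigma>2 \<and>
             (\<exists>K. \<forall>k\<ge>K.
                psi h (x k) \<le> \<sigma>1 * real k powr (- 1 / (2 * \<theta> - 1)) \<and>
                infdist (x k) {z. h z = 0} \<le> \<sigma>2 * real k powr (- \<delta> / (2 * (2 * \<theta> - 1))))))"
proof -
  interpret lmctx h Jac xs \<delta> \<beta> rr L eta rho1 rho2 ups1 ups2 mumin ximin ximax ommin ommax thmin thmax
    xi om th x lam D p \<theta> \<kappa> r\<theta>
    by (rule lmctx.intro) (fact assms)+
  obtain K where K: "\<forall>k\<ge>K. \<not> (h (x k) = 0 \<or> grad_psi h Jac (x k) = 0) \<longrightarrow> p k = 0 \<and>
        x (Suc k) = x k + lm_dir h Jac (x k) (max mumin (lam k * lm_mu h Jac eta (xi k) (om k) (x k)))"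
    using part_i_K by blast
  show ?thesis
  proof (intro conjI impI)
    show "\<exists>K. \<forall>k\<ge>K. \<not> (h (x k) = 0 \<or> grad_psi h Jac (x k) = 0) \<longrightarrow> p k = 0 \<and>
        x (Suc k) = x k + lm_dir h Jac (x k) (max mumin (lam k * lm_mu h Jac eta (xi k) (om k) (x k)))"
      using K by blast
  qed (use part_ii part_iii part_iv part_v in blast)+
qed

end
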